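(* Let $J\in\mathcal{D}(X)$ and, for each $x\in X$, let $\bar U(x)\subset U(x)$ be such that $(\bar TJ)(x)\le J(x)$ for all $x\in X$, where $(\bar TJ')(x)=\inf_{u\in\bar U(x)}\{g(x,u)+J'(f(x,u))\}$ for $J'\in\mathcal{E}^+(X)$. Then $\bar T^\ell J\in\mathcal{D}(X)$ for every positive integer $\ell$, where $\bar T^\ell$ denotes the $\ell$-fold composition of $\bar T$.
   Context: Setting: $X$ (state space) and $U$ (control space) are sets; for each $x\in X$, $U(x)\subset U$ is nonempty; $f:X\times U\to X$; the stage cost $g$ satisfies $0\le g(x,u)\le\infty$ for all $x\in X$, $u\in U(x)$. $\mathcal{E}^+(X)$ denotes the set of all functions $J:X\to[0,\infty]$. The Bellman operator is $(TJ)(x)=\inf_{u\in U(x)}\{g(x,u)+J(f(x,u))\}$. The region of decreasing is $\mathcal{D}(X)=\{J\in\mathcal{E}^+(X): (TJ)(x)\le J(x)\ \forall x\in X\}$. Standing assumption: for every $J\in\mathcal{E}^+(X)$ and every $x\in X$, the infimum defining $(TJ)(x)$ is attained. *)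

theory Defs
  imports Complex_Main "HOL-Library.Extended_Nonnegative_Real"
begin

text \<open>Functions J : X \<Rightarrow> [0,\<infinity>] are modelled as 'x \<Rightarrow> ennreal (the set E+(X) is the whole type).
  Bellman operator associated with a control-constraint map V (V = U gives T, V = Ubar gives Tbar).\<close>
definition bellman :: "('x \<Rightarrow> 'u \<Rightarrow> ennreal) \<Rightarrow> ('x \<Rightarrow> 'u \<Rightarrow> 'x) \<Rightarrow> ('x \<Rightarrow> 'u set)
    \<Rightarrow> ('x \<Rightarrow> ennreal) \<Rightarrow> 'x \<Rightarrow> ennreal" where
  "bellman g f V J x = (INF u\<in>V x. g x u + J (f x u))"

definition region_of_decreasing :: "('x \<Rightarrow> 'u \<Rightarrow> ennreal) \<Rightarrow> ('x \<Rightarrow> 'u \<Rightarrow> 'x) \<Rightarrow> ('x \<Rightarrow> 'u set)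
    \<Rightarrow> ('x \<Rightarrow> ennreal) set" where
  "region_of_decreasing g f U = {J. \<forall>x. bellman g f U J x \<le> J x}"

end

theory Submission
  imports Defs
begin

lemma bellman_mono:
  assumes "\<And>y. J1 y \<le> J2 y"
  shows "bellman g f V J1 x \<le> bellman g f V J2 x"
  unfolding bellman_def
  by (rule INF_mono) (use assms add_left_mono in blast)

lemma bellman_sub:
  assumes "V x \<subseteq> W x"
  shows "bellman g f W J x \<le> bellman g f V J x"
  unfolding bellman_def using assms by (rule INF_superset_mono) simp

theorem corollary4:
  fixes g :: "'x \<Rightarrow> 'u \<Rightarrow> ennreal" and f :: "'x \<Rightarrow> 'u \<Rightarrow> 'x"
    and U Ubar :: "'x \<Rightarrow> 'u set" and J :: "'x \<Rightarrow> ennreal" and l :: nat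
  assumes U_nonempty: "\<And>x. U x \<noteq> {}"
    and attained: "\<And>J' x. \<exists>u\<in>U x. bellman g f U J' x = g x u + J' (f x u)"
    and J_dec: "J \<in> region_of_decreasing g f U"
    and Ubar_sub: "\<And>x. Ubar x \<subseteq> U x"
    and Ubar_dec: "\<And>x. bellman g f Ubar J x \<le> J x"
    and l_pos: "l \<ge> 1"
  shows "(bellman g f Ubar ^^ l) J \<in> region_of_decreasing g f U"
proof -
  have step: "\<And>x. (bellman g f Ubar ^^ Suc k) J x \<le> (bellman g f Ubar ^^ k) J x" for k
  proof (induction k)
    case 0
    then show ?case using Ubar_dec by simp
  next
    case (Suc k)
    show ?case
      using bellman_mono[of "(bellman g f Ubar ^^ Suc k) J" "(bellman g f Ubar ^^ k) J", OF Suc]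
      by simp
  qed
  show ?thesis
    unfolding region_of_decreasing_def
  proof (intro CollectI allI)
    fix x
    have "bellman g f U ((bellman g f Ubar ^^ l) J) x \<le> bellman g f Ubar ((bellman g f Ubar ^^ l) J) x"
      by (rule bellman_sub[where V=Ubar and W=U, OF Ubar_sub])
    also have "\<dots> = (bellman g f Ubar ^^ Suc l) J x" by simp
    also have "\<dots> \<le> (bellman g f Ubar ^^ l) J x" by (rule step)
    finally show "bellman g f U ((bellman g f Ubar ^^ l) J) x \<le> (bellman g f Ubar ^^ l) J x" .
  qed
qed

end
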